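(* Let $m>0$ and let $f\colon\mathbb{C}\mathbb{P}^m\to\mathbb{C}\mathbb{P}^N$ be an algebraic morphism given by $[x]\mapsto[f_0(x),\dots,f_N(x)]$, where $f_0,\dots,f_N$ are linearly independent homogeneous polynomials of degree $d$. If $f$ is projectively $k$-regular, then $d\ge k-1$.
   Context: A map $f\colon\mathbb{C}\mathbb{P}^m\to\mathbb{C}\mathbb{P}^N$ is projectively $k$-regular if the images of any $k$ distinct points span a $(k-1)$-dimensional projective linear subspace. *)

theory Defs
  imports Complex_Main
begin

text \<open>Vectors of C^(m+1) are functions nat => complex, coordinates 0..m (zero beyond m).\<close>

definition mexps :: "nat \<Rightarrow> nat \<Rightarrow> (nat \<Rightarrow> nat) set" where
  "mexps m d = {\<alpha>. (\<forall>i>m. \<alpha> i = 0) \<and> (\<Sum>i\<le>m. \<alpha> i) = d}"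

definition hpoly_eval :: "nat \<Rightarrow> nat \<Rightarrow> ((nat \<Rightarrow> nat) \<Rightarrow> complex) \<Rightarrow> (nat \<Rightarrow> complex) \<Rightarrow> complex" where
  "hpoly_eval m d c x = (\<Sum>\<alpha>\<in>mexps m d. c \<alpha> * (\<Prod>i\<le>m. x i ^ \<alpha> i))"

definition polys_lin_indep :: "nat \<Rightarrow> nat \<Rightarrow> nat \<Rightarrow> (nat \<Rightarrow> (nat \<Rightarrow> nat) \<Rightarrow> complex) \<Rightarrow> bool" where
  "polys_lin_indep m d N c \<longleftrightarrow>
     (\<forall>a::nat \<Rightarrow> complex. (\<forall>\<alpha>\<in>mexps m d. (\<Sum>j\<le>N. a j * c j \<alpha>) = 0) \<longrightarrow> (\<forall>j\<le>N. a j = 0))"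

text \<open>Nonzero vectors of C^(m+1), i.e. representatives of points of CP^m.\<close>
definition nzvecs :: "nat \<Rightarrow> (nat \<Rightarrow> complex) set" where
  "nzvecs m = {x. (\<forall>i>m. x i = 0) \<and> (\<exists>i\<le>m. x i \<noteq> 0)}"

definition proj_eq :: "nat \<Rightarrow> (nat \<Rightarrow> complex) \<Rightarrow> (nat \<Rightarrow> complex) \<Rightarrow> bool" where
  "proj_eq m x y \<longleftrightarrow> (\<exists>t. t \<noteq> 0 \<and> (\<forall>i\<le>m. y i = t * x i))"

definition is_morphism :: "nat \<Rightarrow> nat \<Rightarrow> nat \<Rightarrow> (nat \<Rightarrow> (nat \<Rightarrow> nat) \<Rightarrow> complex) \<Rightarrow> bool" where
  "is_morphism m d N c \<longleftrightarrow> (\<forall>x\<in>nzvecs m. \<exists>j\<le>N. hpoly_eval m d (c j) x \<noteq> 0)"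

definition vecs_lin_indep :: "nat \<Rightarrow> nat \<Rightarrow> (nat \<Rightarrow> nat \<Rightarrow> complex) \<Rightarrow> bool" where
  "vecs_lin_indep N k v \<longleftrightarrow>
     (\<forall>a::nat \<Rightarrow> complex. (\<forall>j\<le>N. (\<Sum>i<k. a i * v i j) = 0) \<longrightarrow> (\<forall>i<k. a i = 0))"

text \<open>Projective k-regularity: images of any k distinct points of CP^m span a (k-1)-dimensional
  projective subspace, i.e. their representative vectors in C^(N+1) are linearly independent.\<close>
definition proj_k_regular :: "nat \<Rightarrow> nat \<Rightarrow> nat \<Rightarrow> (nat \<Rightarrow> (nat \<Rightarrow> nat) \<Rightarrow> complex) \<Rightarrow> nat \<Rightarrow> bool" where
  "proj_k_regular m d N c k \<longleftrightarrow>
     (\<forall>p :: nat \<Rightarrow> nat \<Rightarrow> complex.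
        (\<forall>i<k. p i \<in> nzvecs m) \<and> (\<forall>i<k. \<forall>i'<k. i \<noteq> i' \<longrightarrow> \<not> proj_eq m (p i) (p i'))
        \<longrightarrow> vecs_lin_indep N k (\<lambda>i j. hpoly_eval m d (c j) (p i)))"

end

theory Submission
  imports Defs
begin

lemma root_ne1:
  fixes n e :: nat assumes "0 < e" "e < n"
  shows "cis (2*pi/n) ^ e \<noteq> 1"
proof
  assume "cis (2*pi/n) ^ e = 1"
  hence "cis (2*pi*real e/n) = 1" by (simp add: DeMoivre mult.commute)
  hence "cos (2*pi*real e/n) = 1" by (simp add: complex_eq_iff)
  then obtain z :: int where z: "2*pi*real e/n = real_of_int z * 2 * pi"
    by (subst (asm) cos_one_2pi_int) blast
  have "real e = real_of_int z * n" using z assms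
    by (simp add: divide_eq_eq)
  hence "int e = z * int n" by (metis of_int_eq_iff of_int_mult of_int_of_nat_eq)
  moreover have "z \<ge> 1"
  proof (rule ccontr)
    assume "\<not> z \<ge> 1" hence "z \<le> 0" by simp
    hence "z * int n \<le> 0" by (simp add: mult_nonpos_nonneg)
    thus False using \<open>int e = z * int n\<close> assms by simp
  qed
  hence "z * int n \<ge> 1 * int n" by (intro mult_right_mono) auto
  ultimately show False using assms by simp
qed

lemma roots_inj:
  fixes n i i' :: nat assumes "i < n" "i' < n" "i \<noteq> i'"
  shows "cis (2*pi/n) ^ i \<noteq> cis (2*pi/n) ^ i'"
proof
  assume h: "cis (2*pi/n) ^ i = cis (2*pi/n) ^ i'"
  { fix a b :: nat assume "a < b" "b < n" "cis (2*pi/n) ^ a = cis (2*pi/n) ^ b"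
    hence "cis (2*pi/n) ^ a * cis (2*pi/n) ^ (b - a) = cis (2*pi/n) ^ a * 1"
      by (metis power_add[symmetric] \<open>a<b\<close> le_add_diff_inverse less_imp_le mult_1_right)
    hence "cis (2*pi/n) ^ (b - a) = 1" by (simp add: cis_neq_zero)
    hence False using root_ne1[of "b-a" n] \<open>a<b\<close> \<open>b<n\<close> by simp }
  thus False using h assms by (metis linorder_neqE_nat)
qed

theorem lemma6p5:
  fixes m N d k :: nat and c :: "nat \<Rightarrow> (nat \<Rightarrow> nat) \<Rightarrow> complex"
  assumes "m > 0"
    and "is_morphism m d N c"
    and "polys_lin_indep m d N c"
    and "proj_k_regular m d N c k"
  shows "d \<ge> k - 1"
proof (rule ccontr)
  assume "\<not> d \<ge> k - 1"
  hence kn: "d + 2 \<le> k" by simp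
  define n where "n = d + 2"
  define w where "w = cis (2*pi/n)"
  define t where "t = (\<lambda>i::nat. if i < n then w ^ i else of_nat i + 2 :: complex)"
  define x where "x = (\<lambda>s::complex. \<lambda>l::nat. if l = 1 then s else if l = 0 then 1 else (0::complex))"
  define p where "p = (\<lambda>i. x (t i))"
  define a where "a = (\<lambda>i::nat. if i < n then w ^ i else 0)"
  have w0: "w \<noteq> 0" unfolding w_def by (simp add: cis_neq_zero)
  have nw: "norm w = 1" unfolding w_def by simp
  have tinj: "t i \<noteq> t i'" if "i \<noteq> i'" for i i'
  proof -
    have nb: "norm (of_nat j + 2 :: complex) \<ge> 2" for j :: nat
    proof -
      have "(of_nat j + 2 :: complex) = of_real (real j + 2)" by simp
      hence "norm (of_nat j + 2 :: complex) = real j + 2" by (simp only: norm_of_real)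
      thus ?thesis by simp
    qed
    show ?thesis
    proof (cases "i < n")
      case True note iT = True
      show ?thesis
      proof (cases "i' < n")
        case True thus ?thesis using iT that roots_inj[of i n i'] unfolding t_def w_def by simp
      next
        case False
        have "norm (t i) = 1" using iT nw by (simp add: t_def norm_power)
        moreover have "norm (t i') \<ge> 2" using False nb by (simp add: t_def)
        ultimately show ?thesis by auto
      qed
    next
      case False note iF = False
      show ?thesis
      proof (cases "i' < n")
        case True
        have "norm (t i') = 1" using True nw by (simp add: t_def norm_power)
        moreover have "norm (t i) \<ge> 2" using iF nb by (simp add: t_def)
        ultimately show ?thesis by auto
      next
        case False thus ?thesis using iF that by (simp add: t_def)
      qed
    qed
  qed
  have pnz: "p i \<in> nzvecs m" for i
    unfolding nzvecs_def p_def x_def using assms(1) by auto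
  have pdist: "\<not> proj_eq m (p i) (p i')" if "i \<noteq> i'" for i i'
  proof
    assume "proj_eq m (p i) (p i')"
    then obtain s where s: "\<forall>l\<le>m. p i' l = s * p i l" unfolding proj_eq_def by blast
    from s[rule_format, of 0] have "s = 1" by (simp add: p_def x_def)
    with s[rule_format, of 1] assms(1) have "t i' = t i" by (simp add: p_def x_def)
    thus False using tinj that by metis
  qed
  have li: "vecs_lin_indep N k (\<lambda>i j. hpoly_eval m d (c j) (p i))"
    using assms(4) pnz pdist unfolding proj_k_regular_def by blast
  have key: "(\<Sum>i<k. a i * (\<Prod>l\<le>m. p i l ^ \<alpha> l)) = 0" if "\<alpha> \<in> mexps m d" for \<alpha>
  proof -
    define Q where "Q = (\<Prod>l\<in>{..m}-{1}. x 0 l ^ \<alpha> l)"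
    have pr: "(\<Prod>l\<le>m. x s l ^ \<alpha> l) = s ^ \<alpha> 1 * Q" for s
    proof -
      have "(\<Prod>l\<le>m. x s l ^ \<alpha> l) = x s 1 ^ \<alpha> 1 * (\<Prod>l\<in>{..m}-{1}. x s l ^ \<alpha> l)"
        using assms(1) by (subst prod.remove[of _ 1]) auto
      also have "(\<Prod>l\<in>{..m}-{1}. x s l ^ \<alpha> l) = Q" unfolding Q_def
        by (rule prod.cong) (auto simp: x_def)
      finally show ?thesis by (simp add: x_def)
    qed
    have a1: "\<alpha> 1 \<le> d"
    proof -
      have "\<alpha> 1 \<le> (\<Sum>i\<le>m. \<alpha> i)" using assms(1)
        by (intro member_le_sum) auto
      thus ?thesis using that by (simp add: mexps_def)
    qed
    have "(\<Sum>i<k. a i * (\<Prod>l\<le>m. p i l ^ \<alpha> l)) = (\<Sum>i<n. a i * (\<Prod>l\<le>m. p i l ^ \<alpha> l))"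
    proof -
      have nk: "n \<le> k" using kn n_def by simp
      have "(\<Sum>i<k. a i * (\<Prod>l\<le>m. p i l ^ \<alpha> l)) = (\<Sum>i\<in>{..<n} \<union> {n..<k}. a i * (\<Prod>l\<le>m. p i l ^ \<alpha> l))"
        by (simp only: ivl_disj_un_one(2)[OF nk])
      also have "\<dots> = (\<Sum>i<n. a i * (\<Prod>l\<le>m. p i l ^ \<alpha> l)) + (\<Sum>i\<in>{n..<k}. a i * (\<Prod>l\<le>m. p i l ^ \<alpha> l))"
        by (rule sum.union_disjoint) auto
      finally have "(\<Sum>i<k. a i * (\<Prod>l\<le>m. p i l ^ \<alpha> l)) = (\<Sum>i<n. a i * (\<Prod>l\<le>m. p i l ^ \<alpha> l)) + (\<Sum>i\<in>{n..<k}. a i * (\<Prod>l\<le>m. p i l ^ \<alpha> l))" .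
      moreover have "(\<Sum>i\<in>{n..<k}. a i * (\<Prod>l\<le>m. p i l ^ \<alpha> l)) = 0"
        by (rule sum.neutral) (simp add: a_def)
      ultimately show ?thesis by simp
    qed
    also have "\<dots> = (\<Sum>i<n. (w ^ (\<alpha> 1 + 1)) ^ i) * Q"
      unfolding sum_distrib_right
    proof (rule sum.cong[OF refl])
      fix i assume "i \<in> {..<n}"
      hence "a i * (\<Prod>l\<le>m. p i l ^ \<alpha> l) = w ^ i * ((w ^ i) ^ \<alpha> 1 * Q)"
        by (simp add: p_def pr a_def t_def)
      also have "\<dots> = ((w ^ i) ^ (\<alpha> 1 + 1)) * Q" by (simp only: power_add power_one_right mult_ac)
      also have "(w ^ i) ^ (\<alpha> 1 + 1) = (w ^ (\<alpha> 1 + 1)) ^ i"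
        by (metis power_mult mult.commute)
      finally show "a i * (\<Prod>l\<le>m. p i l ^ \<alpha> l) = (w ^ (\<alpha> 1 + 1)) ^ i * Q" .
    qed
    also have "(\<Sum>i<n. (w ^ (\<alpha> 1 + 1)) ^ i) = 0"
    proof -
      have ne: "w ^ (\<alpha> 1 + 1) \<noteq> 1" unfolding w_def
        by (rule root_ne1) (use a1 n_def in auto)
      have "(w ^ (\<alpha> 1 + 1)) ^ n = (w ^ n) ^ (\<alpha> 1 + 1)" by (metis power_mult mult.commute)
      also have "w ^ n = 1"
      proof -
        have "w ^ n = cis (real n * (2*pi/real n))" unfolding w_def by (rule DeMoivre)
        also have "real n * (2*pi/real n) = 2*pi" using n_def by simp
        finally show ?thesis by simp
      qed
      finally have "(w ^ (\<alpha> 1 + 1)) ^ n = 1" by simp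
      thus ?thesis using ne by (simp add: sum_gp_strict)
    qed
    finally show ?thesis by simp
  qed
  have "\<forall>j\<le>N. (\<Sum>i<k. a i * hpoly_eval m d (c j) (p i)) = 0"
  proof (intro allI impI)
    fix j
    have "(\<Sum>i<k. a i * hpoly_eval m d (c j) (p i))
        = (\<Sum>\<alpha>\<in>mexps m d. c j \<alpha> * (\<Sum>i<k. a i * (\<Prod>l\<le>m. p i l ^ \<alpha> l)))"
      unfolding hpoly_eval_def sum_distrib_left
      by (subst sum.swap) (simp add: algebra_simps)
    also have "\<dots> = 0" using key by simp
    finally show "(\<Sum>i<k. a i * hpoly_eval m d (c j) (p i)) = 0" .
  qed
  with li have "\<forall>i<k. a i = 0" unfolding vecs_lin_indep_def by blast
  moreover have "a 0 = 1" "0 < k" using kn by (auto simp: a_def n_def)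
  ultimately show False by simp
qed

end
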